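(* Let $k$ be a field of characteristic $p>0$ with algebraic closure $\overline k$. Let $$\sigma(x)=\sum_{i=d}^{\infty}\alpha_i x^i\in\overline k((x)),$$ with $d\in\mathbb Z$ and $\alpha_i\in\overline k$ for all $i$, and let $L=k(\{\alpha_i\})\subset\overline k$ be the field generated over $k$ by the coefficients of $\sigma$. Assume $L$ is purely inseparable over $k$. Then $\sigma(x)$ is algebraic over $k((x))$ if and only if there exists $n\in\mathbb N$ such that $L^{p^n}\subset k$.
   Context: For a field $L$ of characteristic $p>0$ and $n\in\mathbb N$, $L^{p^n}=\{f^{p^n}\mid f\in L\}$. $\overline k((x))$ denotes the field of formal Laurent series in $x$ with coefficients in $\overline k$. *)

theory Defs
  imports "HOL-Computational_Algebra.Formal_Laurent_Series" "HOL-Computational_Algebra.Polynomial"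
begin

definition is_subfield :: "'a::field set \<Rightarrow> bool" where
  "is_subfield F \<longleftrightarrow> 0 \<in> F \<and> 1 \<in> F \<and>
     (\<forall>a\<in>F. \<forall>b\<in>F. a + b \<in> F \<and> a - b \<in> F \<and> a * b \<in> F) \<and>
     (\<forall>a\<in>F. inverse a \<in> F)"

definition gen_field :: "'a::field set \<Rightarrow> 'a set \<Rightarrow> 'a set" where
  "gen_field k S = \<Inter> {F. is_subfield F \<and> k \<subseteq> F \<and> S \<subseteq> F}"

definition algebraic_over :: "'a::field set \<Rightarrow> 'a \<Rightarrow> bool" where
  "algebraic_over F a \<longleftrightarrow> (\<exists>q. q \<noteq> 0 \<and> (\<forall>i. coeff q i \<in> F) \<and> poly q a = 0)"

definition alg_closed_field :: "'a::field itself \<Rightarrow> bool" where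
  "alg_closed_field _ \<longleftrightarrow> (\<forall>q::'a poly. degree q > 0 \<longrightarrow> (\<exists>x. poly q x = 0))"

definition is_alg_closure_of :: "'a::field set \<Rightarrow> bool" where
  "is_alg_closure_of k \<longleftrightarrow> is_subfield k \<and> alg_closed_field TYPE('a) \<and> (\<forall>a::'a. algebraic_over k a)"

definition purely_inseparable :: "nat \<Rightarrow> 'a::field set \<Rightarrow> 'a set \<Rightarrow> bool" where
  "purely_inseparable p k L \<longleftrightarrow> (\<forall>a\<in>L. \<exists>m::nat. a ^ (p ^ m) \<in> k)"

text \<open>k((x)) as a subfield of K((x)): Laurent series with all coefficients in k.\<close>
definition laurent_over :: "'a::field set \<Rightarrow> 'a fls set" where
  "laurent_over k = {f. \<forall>i. fls_nth f i \<in> k}"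

end

theory Submission imports Defs "HOL-Computational_Algebra.Primes" begin
unbundle fps_syntax

lemma sf_0: "is_subfield F \<Longrightarrow> 0 \<in> F" unfolding is_subfield_def by blast
lemma sf_1: "is_subfield F \<Longrightarrow> 1 \<in> F" unfolding is_subfield_def by blast
lemma sf_add: "is_subfield F \<Longrightarrow> a \<in> F \<Longrightarrow> b \<in> F \<Longrightarrow> a + b \<in> F" unfolding is_subfield_def by blast
lemma sf_diff: "is_subfield F \<Longrightarrow> a \<in> F \<Longrightarrow> b \<in> F \<Longrightarrow> a - b \<in> F" unfolding is_subfield_def by blast
lemma sf_mult: "is_subfield F \<Longrightarrow> a \<in> F \<Longrightarrow> b \<in> F \<Longrightarrow> a * b \<in> F" unfolding is_subfield_def by blast
lemma sf_inv: "is_subfield F \<Longrightarrow> a \<in> F \<Longrightarrow> inverse a \<in> F" unfolding is_subfield_def by blast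
lemma sf_uminus: "is_subfield F \<Longrightarrow> a \<in> F \<Longrightarrow> - a \<in> F"
  using sf_diff[of F 0 a] sf_0[of F] by simp
lemma sf_power: "is_subfield F \<Longrightarrow> a \<in> F \<Longrightarrow> a ^ n \<in> F"
  by (induction n) (auto intro: sf_1 sf_mult)
lemma sf_sum: "is_subfield F \<Longrightarrow> (\<And>x. x \<in> A \<Longrightarrow> f x \<in> F) \<Longrightarrow> sum f A \<in> F"
  by (induction A rule: infinite_finite_induct) (auto intro: sf_0 sf_add)

lemma gen_field_least: "is_subfield F \<Longrightarrow> k \<subseteq> F \<Longrightarrow> S \<subseteq> F \<Longrightarrow> gen_field k S \<subseteq> F"
  unfolding gen_field_def by blast
lemma gen_field_gen: "S \<subseteq> gen_field k S"
  unfolding gen_field_def by blast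

lemma frob_subfield:
  fixes k :: "'a::field set"
  assumes k: "is_subfield k" and pr: "prime CHAR('a)"
  shows "is_subfield {a. a ^ (CHAR('a) ^ N) \<in> k}" "k \<subseteq> {a. a ^ (CHAR('a) ^ N) \<in> k}"
proof -
  define Q where "Q = CHAR('a) ^ N"
  have Qpos: "Q > 0" using pr unfolding Q_def by (simp add: prime_gt_0_nat)
  have fd: "(x + y) ^ Q = x ^ Q + y ^ Q" for x y :: 'a
    by (rule freshmans_dream'[OF pr]) (simp add: Q_def)
  have dd: "(x - y) ^ Q = x ^ Q - y ^ Q" for x y :: 'a
    using fd[of "x - y" y] by (simp add: algebra_simps)
  show "is_subfield {a. a ^ (CHAR('a) ^ N) \<in> k}"
    unfolding is_subfield_def Q_def[symmetric]
    using Qpos k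
    by (auto simp: fd dd power_mult_distrib power_inverse zero_power
             intro: sf_0 sf_1 sf_add sf_diff sf_mult sf_inv)
  show "k \<subseteq> {a. a ^ (CHAR('a) ^ N) \<in> k}" using k sf_power by blast
qed


lemma mult_nth_in:
  fixes f h :: "'a::field fls"
  assumes F: "is_subfield F" and f: "\<And>i. f $$ i \<in> F" and h: "\<And>i. f $$ i \<noteq> 0 \<Longrightarrow> h $$ (n - i) \<in> F"
  shows "(f * h) $$ n \<in> F"
  unfolding fls_times_nth(2)
proof (rule sf_sum[OF F])
  fix i assume "i \<in> {fls_subdegree f..n - fls_subdegree h}"
  show "f $$ i * h $$ (n - i) \<in> F"
    using f[of i] h[of i] sf_mult[OF F] sf_0[OF F] by (cases "f $$ i = 0") auto
qed

lemma frob_nth: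
  fixes f :: "'a::field fls"
  assumes pr: "prime CHAR('a)" and Q: "Q = CHAR('a) ^ s"
  shows "(f ^ Q) $$ n = (if int Q dvd n then (f $$ (n div int Q)) ^ Q else 0)"
proof -
  have Qpos: "Q > 0" using pr unfolding Q by (simp add: prime_gt_0_nat)
  have prF: "prime CHAR('a fls)" using pr by simp
  have QF: "Q = CHAR('a fls) ^ s" using Q by simp
  define N where "N = \<bar>n\<bar>"
  define D where "D = fls_subdegree f"
  define A where "A = (\<Sum>i\<in>{D..N}. fls_const (f $$ i) * fls_X_intpow i)"
  define B where "B = f - A"
  have Anth: "A $$ j = (if D \<le> j \<and> j \<le> N then f $$ j else 0)" for j
  proof -
    have "A $$ j = (\<Sum>i\<in>{D..N}. if j = i then f $$ i else 0)"
      unfolding A_def fls_nth_sum by (intro sum.cong) auto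
    also have "\<dots> = (if D \<le> j \<and> j \<le> N then f $$ j else 0)"
      by (simp add: sum.delta)
    finally show ?thesis .
  qed
  have Bnth: "B $$ j = 0" if "j \<le> N" for j
    using that by (auto simp: B_def Anth D_def)
  have BQ: "(B ^ Q) $$ n = 0"
  proof (cases "B = 0")
    case True thus ?thesis using Qpos by (simp add: zero_power)
  next
    case False
    have "N < fls_subdegree B" by (rule fls_subdegree_greaterI[OF False Bnth])
    moreover have "N \<ge> 0" "n \<le> N" by (auto simp: N_def)
    ultimately have "n < int Q * fls_subdegree B"
      using Qpos by (smt (verit) mult_le_cancel_right1 of_nat_0_less_iff of_nat_le_0_iff int_one_le_iff_zero_less)
    thus ?thesis by (simp add: fls_subdegree_pow)
  qed
  have "f ^ Q = A ^ Q + B ^ Q"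
    unfolding B_def using freshmans_dream'[OF prF QF, of A "f - A"] by simp
  moreover have "A ^ Q = (\<Sum>i\<in>{D..N}. fls_const ((f $$ i) ^ Q) * fls_X_intpow (int Q * i))"
    unfolding A_def freshmans_dream_sum'[OF prF QF]
    by (simp add: power_mult_distrib fls_X_intpow_power fls_const_power[symmetric])
  ultimately have "(f ^ Q) $$ n = (\<Sum>i\<in>{D..N}. if n = int Q * i then (f $$ i) ^ Q else 0)"
    using BQ by (simp add: fls_nth_sum if_distrib cong: if_cong)
  also have "\<dots> = (if int Q dvd n then (f $$ (n div int Q)) ^ Q else 0)"
  proof (cases "int Q dvd n")
    case True
    then obtain i0 where i0: "n = int Q * i0" by blast
    have "(\<Sum>i\<in>{D..N}. if n = int Q * i then (f $$ i) ^ Q else 0)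
          = (\<Sum>i\<in>{D..N}. if i = i0 then (f $$ i) ^ Q else 0)"
      using Qpos by (intro sum.cong) (auto simp: i0)
    also have "\<dots> = (if D \<le> i0 \<and> i0 \<le> N then (f $$ i0) ^ Q else 0)" by (simp add: sum.delta)
    also have "\<dots> = (f $$ i0) ^ Q"
    proof -
      have "i0 \<le> N"
      proof -
        have "\<bar>i0\<bar> \<le> \<bar>int Q * i0\<bar>" using Qpos by (simp add: abs_mult mult_le_cancel_right1)
        thus ?thesis unfolding N_def i0 by linarith
      qed
      moreover have "i0 < D \<Longrightarrow> f $$ i0 = 0" by (simp add: D_def)
      ultimately show ?thesis using Qpos by (auto simp: zero_power)
    qed
    finally show ?thesis using True Qpos by (simp add: i0)
  next
    case False
    thus ?thesis by (intro trans[OF sum.neutral]) auto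
  qed
  finally show ?thesis .
qed


lemma ring_sum: "0 \<in> R \<Longrightarrow> (\<forall>a\<in>R. \<forall>b\<in>R. a + b \<in> R) \<Longrightarrow> (\<And>x. x \<in> A \<Longrightarrow> f x \<in> R) \<Longrightarrow> sum f A \<in> R"
  by (induction A rule: infinite_finite_induct) auto

lemma lin_dep:
  fixes v :: "'j \<Rightarrow> nat \<Rightarrow> 'b::idom"
  assumes R0: "0 \<in> R" and R1: "1 \<in> R" and Rc: "\<forall>a\<in>R. \<forall>b\<in>R. a + b \<in> R \<and> a - b \<in> R \<and> a * b \<in> R"
  shows "finite J \<Longrightarrow> card J > n \<Longrightarrow> (\<forall>j\<in>J. \<forall>i\<ge>n. v j i = 0) \<Longrightarrow> (\<forall>j\<in>J. \<forall>i. v j i \<in> R) \<Longrightarrow>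
     \<exists>d. (\<forall>j\<in>J. d j \<in> R) \<and> (\<exists>j\<in>J. d j \<noteq> 0) \<and> (\<forall>i. (\<Sum>j\<in>J. d j * v j i) = 0)"
proof (induction n arbitrary: J v)
  case 0
  then obtain j where "j \<in> J" by fastforce
  thus ?case using 0 R1 by (intro exI[of _ "\<lambda>_. 1"]) auto
next
  case (Suc n)
  show ?case
  proof (cases "\<forall>j\<in>J. v j n = 0")
    case True
    have "\<forall>j\<in>J. \<forall>i\<ge>n. v j i = 0"
      using True Suc.prems(3) by (metis Suc_leI le_neq_implies_less)
    thus ?thesis using Suc.IH[of J v] Suc.prems by auto
  next
    case False
    then obtain j' where j': "j' \<in> J" "v j' n \<noteq> 0" by blast
    define J' where "J' = J - {j'}"
    define w where "w = (\<lambda>j i. v j' n * v j i - v j n * v j' i)"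
    have fJ': "finite J'" "card J' > n" using Suc.prems j' by (auto simp: J'_def)
    have w0: "\<forall>j\<in>J'. \<forall>i\<ge>n. w j i = 0"
    proof (intro ballI allI impI)
      fix j i assume "j \<in> J'" "n \<le> i"
      thus "w j i = 0" using Suc.prems(3) j'
        by (cases "i = n") (auto simp: w_def J'_def)
    qed
    have wR: "\<forall>j\<in>J'. \<forall>i. w j i \<in> R"
      using Suc.prems(4) j' Rc by (auto simp: w_def J'_def)
    obtain d where d: "\<forall>j\<in>J'. d j \<in> R" "\<exists>j\<in>J'. d j \<noteq> 0" "\<forall>i. (\<Sum>j\<in>J'. d j * w j i) = 0"
      using Suc.IH[OF fJ' w0 wR] by blast
    define d' where "d' = (\<lambda>j. if j = j' then - (\<Sum>j\<in>J'. d j * v j n) else d j * v j' n)"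
    have J: "J = insert j' J'" "j' \<notin> J'" using j' by (auto simp: J'_def)
    have "(\<forall>j\<in>J. d' j \<in> R)"
    proof
      fix j assume "j \<in> J"
      show "d' j \<in> R"
      proof (cases "j = j'")
        case True
        have "(\<Sum>j\<in>J'. d j * v j n) \<in> R"
          using d(1) Suc.prems(4) Rc R0 by (intro ring_sum) (auto simp: J'_def)
        hence "0 - (\<Sum>j\<in>J'. d j * v j n) \<in> R" using Rc R0 by blast
        thus ?thesis using True by (simp add: d'_def)
      next
        case False thus ?thesis using d(1) Suc.prems(4) Rc \<open>j \<in> J\<close> j' by (auto simp: d'_def J'_def)
      qed
    qed
    moreover have "\<exists>j\<in>J. d' j \<noteq> 0"
    proof -
      obtain j where "j \<in> J'" "d j \<noteq> 0" using d(2) by blast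
      thus ?thesis using j' by (intro bexI[of _ j]) (auto simp: d'_def J'_def)
    qed
    moreover have "\<forall>i. (\<Sum>j\<in>J. d' j * v j i) = 0"
    proof
      fix i
      have "(\<Sum>j\<in>J. d' j * v j i) = d' j' * v j' i + (\<Sum>j\<in>J'. d' j * v j i)"
        using J fJ' by simp
      also have "(\<Sum>j\<in>J'. d' j * v j i) = (\<Sum>j\<in>J'. d j * v j' n * v j i)"
        using J by (intro sum.cong) (auto simp: d'_def)
      also have "d' j' * v j' i = - (\<Sum>j\<in>J'. d j * v j n * v j' i)"
        by (simp add: d'_def sum_distrib_right)
      finally have "(\<Sum>j\<in>J. d' j * v j i) = (\<Sum>j\<in>J'. d j * w j i)"
        by (simp add: w_def algebra_simps sum_subtractf)
      thus "(\<Sum>j\<in>J. d' j * v j i) = 0" using d(3) by simp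
    qed
    ultimately show ?thesis by blast
  qed
qed


lemma reduce_pow:
  fixes x lc :: "'b::comm_ring_1"
  assumes R0: "0 \<in> R" and R1: "1 \<in> R" and Rc: "\<forall>a\<in>R. \<forall>b\<in>R. a + b \<in> R \<and> a - b \<in> R \<and> a * b \<in> R"
    and m: "m > 0" and lcR: "lc \<in> R" and cR: "\<And>i. c i \<in> R"
    and rel: "lc * x ^ m = - (\<Sum>i<m. c i * x ^ i)"
  shows "\<exists>a. (\<forall>i. a i \<in> R) \<and> lc ^ N * x ^ N = (\<Sum>i<m. a i * x ^ i)"
proof (induction N)
  case 0
  have "(\<Sum>i<m. (if i = 0 then 1 else 0) * x ^ i) = (\<Sum>i<m. if i = 0 then 1 else (0::'b))"
    by (intro sum.cong) auto
  also have "\<dots> = 1" using m by (simp add: sum.delta)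
  finally show ?case
    using R0 R1 by (intro exI[of _ "\<lambda>i. if i = 0 then 1 else 0"]) auto
next
  case (Suc N)
  then obtain a where a: "\<forall>i. a i \<in> R" "lc ^ N * x ^ N = (\<Sum>i<m. a i * x ^ i)" by blast
  obtain m' where m': "m = Suc m'" using m by (cases m) auto
  define b where "b = (\<lambda>i. (if i = 0 then 0 else lc * a (i - 1)) - a m' * c i)"
  have "lc ^ Suc N * x ^ Suc N = lc * x * (\<Sum>i<m. a i * x ^ i)"
    using a(2) by (simp add: algebra_simps)
  also have "\<dots> = (\<Sum>i<m. lc * a i * x ^ Suc i)"
    by (simp add: sum_distrib_left algebra_simps)
  also have "\<dots> = (\<Sum>i<m'. lc * a i * x ^ Suc i) + a m' * (lc * x ^ m)"
    by (simp add: m' algebra_simps)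
  also have "\<dots> = (\<Sum>i<m. (if i = 0 then 0 else lc * a (i - 1)) * x ^ i) - (\<Sum>i<m. a m' * c i * x ^ i)"
  proof -
    have "(\<Sum>i<m. (if i = 0 then 0 else lc * a (i - 1)) * x ^ i) = (\<Sum>i<m'. lc * a i * x ^ Suc i)"
      unfolding m' sum.lessThan_Suc_shift by simp
    moreover have "a m' * (lc * x ^ m) = - (\<Sum>i<m. a m' * c i * x ^ i)"
      unfolding rel by (simp add: sum_distrib_left algebra_simps)
    ultimately show ?thesis by simp
  qed
  also have "\<dots> = (\<Sum>i<m. b i * x ^ i)"
    by (simp add: b_def algebra_simps sum_subtractf)
  finally have "lc ^ Suc N * x ^ Suc N = (\<Sum>i<m. b i * x ^ i)" .
  moreover have "\<forall>i. b i \<in> R"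
    using a(1) cR lcR Rc R0 by (auto simp: b_def)
  ultimately show ?case by blast
qed

lemma lo_nth: "f \<in> laurent_over k \<Longrightarrow> f $$ i \<in> k" unfolding laurent_over_def by auto

lemma lo_closed:
  assumes k: "is_subfield k"
  shows "0 \<in> laurent_over k" "1 \<in> laurent_over k"
    "\<forall>a\<in>laurent_over k. \<forall>b\<in>laurent_over k. a + b \<in> laurent_over k \<and> a - b \<in> laurent_over k \<and> a * b \<in> laurent_over k"
  using k by (auto simp: laurent_over_def sf_0 sf_1 sf_add sf_diff intro!: mult_nth_in)


lemma bounded_exp:
  fixes k :: "'a::field set" and \<tau> g :: "'a fls" and D :: "nat \<Rightarrow> 'a fls"
  assumes k: "is_subfield k" and pr: "prime p" and pC: "p = CHAR('a)"
    and ex: "\<forall>n. \<exists>r. (\<tau> $$ n) ^ (p ^ r) \<in> k"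
    and gK: "g \<in> laurent_over k" and g0: "g \<noteq> 0" and DK: "\<And>s. D s \<in> laurent_over k"
    and T: "finite T" "\<And>s. s \<in> T \<Longrightarrow> s \<ge> 1"
    and eq: "g * \<tau> = - (\<Sum>s\<in>T. D s * \<tau> ^ (p ^ s))"
  shows "\<exists>E. \<forall>n. (\<tau> $$ n) ^ (p ^ E) \<in> k"
proof -
  have p2: "p \<ge> 2" using pr by (simp add: prime_ge_2_nat)
  define w where "w = fls_subdegree g"
  define gw where "gw = g $$ w"
  have gw0: "gw \<noteq> 0" using g0 by (simp add: gw_def w_def)
  define vmin where "vmin = Min (insert 0 ((\<lambda>s. fls_subdegree (D s)) ` T))"
  have vmin: "vmin \<le> fls_subdegree (D s)" if "s \<in> T" for s
    unfolding vmin_def using T(1) that by (intro Min_le) auto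
  define B where "B = max 0 (w - vmin)"
  define d\<tau> where "d\<tau> = fls_subdegree \<tau>"
  obtain R where R: "\<And>n. (\<tau> $$ n) ^ (p ^ R n) \<in> k" using ex by metis
  define E where "E = Max (R ` {d\<tau>..B})"
  define G where "G = {b. b ^ (CHAR('a) ^ E) \<in> k}"
  have prC: "prime CHAR('a)" using pr pC by simp
  have G: "is_subfield G" "k \<subseteq> G" unfolding G_def using frob_subfield[OF k prC] by auto
  have base: "\<tau> $$ n \<in> G" if "n \<le> B" for n
  proof (cases "n < d\<tau>")
    case True thus ?thesis using sf_0[OF G(1)] by (simp add: d\<tau>_def)
  next
    case False
    hence "n \<in> {d\<tau>..B}" using that by auto
    hence "R n \<le> E" unfolding E_def by (intro Max_ge) auto
    hence "p ^ E = p ^ R n * p ^ (E - R n)" by (simp flip: power_add)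
    hence "(\<tau> $$ n) ^ (p ^ E) = ((\<tau> $$ n) ^ (p ^ R n)) ^ (p ^ (E - R n))" by (simp add: power_mult)
    also have "\<dots> \<in> k" using R sf_power[OF k] by blast
    finally show ?thesis by (simp add: G_def pC)
  qed
  have step: "\<tau> $$ n \<in> G" if nB: "n > B" and IH: "\<And>i. i < n \<Longrightarrow> \<tau> $$ i \<in> G" for n
  proof -
    have n0: "n > 0" "n > w - vmin" using nB by (auto simp: B_def)
    have kG: "a \<in> k \<Longrightarrow> a \<in> G" for a using G(2) by blast
    define g' where "g' = g - fls_const gw * fls_X_intpow w"
    have g'nth: "g' $$ i = g $$ i - (if i = w then gw else 0)" for i
      by (simp add: g'_def)
    have g'k: "g' $$ i \<in> k" for i
      unfolding g'nth using lo_nth[OF gK] sf_diff[OF k] sf_0[OF k] by (auto simp: gw_def)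
    have g'w: "g' $$ i \<noteq> 0 \<Longrightarrow> i > w" for i
    proof (rule ccontr)
      assume "g' $$ i \<noteq> 0" "\<not> i > w"
      thus False using g'nth[of i] by (cases "i = w") (auto simp: w_def gw_def)
    qed
    have t1: "(g' * \<tau>) $$ (n + w) \<in> G"
    proof (rule mult_nth_in[OF G(1)])
      show "g' $$ i \<in> G" for i using g'k kG by blast
      show "\<tau> $$ (n + w - i) \<in> G" if "g' $$ i \<noteq> 0" for i
        using g'w[OF that] by (intro IH) auto
    qed
    have t2: "(fls_const gw * fls_X_intpow w * \<tau>) $$ (n + w) = gw * \<tau> $$ n"
    proof -
      have "fls_const gw * fls_X_intpow w * \<tau> = fls_const gw * fls_shift (-w) \<tau>"
        by (simp only: mult.assoc fls_X_intpow_times_conv_shift(1))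
      thus ?thesis by (simp only: fls_mult_const_nth fls_shift_nth) simp
    qed
    have t3: "(g * \<tau>) $$ (n + w) \<in> G"
    proof -
      have "(g * \<tau>) $$ (n + w) = - (\<Sum>s\<in>T. (D s * \<tau> ^ (p ^ s)) $$ (n + w))"
        unfolding eq by (simp add: fls_nth_sum)
      also have "\<dots> \<in> G"
      proof (intro sf_uminus[OF G(1)] sf_sum[OF G(1)])
        fix s assume sT: "s \<in> T"
        define Q where "Q = p ^ s"
        have Q2: "Q \<ge> 2"
        proof -
          have "p ^ 1 \<le> p ^ s" using T(2)[OF sT] p2 by (intro power_increasing) auto
          thus ?thesis using p2 by (simp add: Q_def)
        qed
        show "(D s * \<tau> ^ (p ^ s)) $$ (n + w) \<in> G"
        proof (rule mult_nth_in[OF G(1)])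
          show "D s $$ i \<in> G" for i using lo_nth[OF DK] kG by blast
          show "\<tau> ^ p ^ s $$ (n + w - l) \<in> G" if "D s $$ l \<noteq> 0" for l
          proof -
            have l: "l \<ge> vmin" using vmin[OF sT] fls_subdegree_leI[OF that] by linarith
            have fr: "(\<tau> ^ Q) $$ (n + w - l) = (if int Q dvd (n + w - l) then (\<tau> $$ ((n + w - l) div int Q)) ^ Q else 0)"
              by (rule frob_nth[OF prC]) (simp add: Q_def pC)
            show ?thesis
            proof (cases "int Q dvd (n + w - l)")
              case False thus ?thesis using fr sf_0[OF G(1)] by (simp add: Q_def)
            next
              case True
              then obtain i where i: "n + w - l = int Q * i" by blast
              have "i < n"
              proof (rule ccontr)
                assume "\<not> i < n"
                hence "i \<ge> n" by simp
                hence "int Q * i \<ge> 2 * i" using Q2 n0 by (intro mult_right_mono) auto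
                thus False using i l n0 \<open>i \<ge> n\<close> by linarith
              qed
              have "(\<tau> ^ Q) $$ (n + w - l) = (\<tau> $$ i) ^ Q"
                using fr True Q2 by (simp add: i)
              also have "\<dots> \<in> G" using IH[OF \<open>i < n\<close>] sf_power[OF G(1)] by blast
              finally show ?thesis by (simp add: Q_def)
            qed
          qed
        qed
      qed
      finally show ?thesis .
    qed
    have "g * \<tau> = g' * \<tau> + fls_const gw * fls_X_intpow w * \<tau>"
      by (simp add: g'_def algebra_simps)
    hence "gw * \<tau> $$ n = (g * \<tau>) $$ (n + w) - (g' * \<tau>) $$ (n + w)"
      using t2 by simp
    hence "gw * \<tau> $$ n \<in> G" using t1 t3 sf_diff[OF G(1)] by simp
    moreover have "inverse gw \<in> G"
      using kG sf_inv[OF k] lo_nth[OF gK] by (simp add: gw_def)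
    ultimately have "inverse gw * (gw * \<tau> $$ n) \<in> G" using sf_mult[OF G(1)] by blast
    thus ?thesis using gw0 by (simp add: field_simps)
  qed
  have "\<forall>n. n \<le> B + int N \<longrightarrow> \<tau> $$ n \<in> G" for N
  proof (induction N)
    case 0 thus ?case using base by simp
  next
    case (Suc N)
    show ?case
    proof (intro allI impI)
      fix n assume n: "n \<le> B + int (Suc N)"
      show "\<tau> $$ n \<in> G"
      proof (cases "n \<le> B + int N")
        case True thus ?thesis using Suc by blast
      next
        case False
        hence "n > B" by linarith
        thus ?thesis
          by (rule step) (use Suc False n in auto)
      qed
    qed
  qed
  hence "\<forall>n. \<tau> $$ n \<in> G"
    by (metis add.commute le_add_same_cancel2 nat_le_iff of_nat_0_le_iff le_cases diff_le_eq
              le_diff_eq of_nat_nat int_ops(1) add_increasing2)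
  thus ?thesis unfolding G_def pC by blast
qed


lemma additive_rel:
  fixes k :: "'a::field set" and \<sigma> :: "'a fls" and p :: nat
  assumes k: "is_subfield k" and alg: "algebraic_over (laurent_over k) \<sigma>"
  shows "\<exists>m D. (\<forall>j. D j \<in> laurent_over k) \<and> (\<exists>j\<le>m. D j \<noteq> 0) \<and> (\<Sum>j\<le>m. D j * \<sigma> ^ (p ^ j)) = 0"
proof -
  let ?K = "laurent_over k"
  note K = lo_closed[OF k]
  obtain q where q: "q \<noteq> 0" "\<And>i. coeff q i \<in> ?K" "poly q \<sigma> = 0"
    using alg unfolding algebraic_over_def by blast
  define m where "m = degree q"
  define lc where "lc = coeff q m"
  have lc0: "lc \<noteq> 0" using q(1) by (simp add: lc_def m_def)
  have m0: "m > 0"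
  proof (rule ccontr)
    assume "\<not> m > 0"
    hence "m = 0" by simp
    hence "poly q \<sigma> = lc" by (simp add: poly_altdef lc_def m_def)
    thus False using q(3) lc0 by simp
  qed
  have "0 = (\<Sum>i<Suc m. coeff q i * \<sigma> ^ i)"
    using q(3) by (simp add: poly_altdef m_def lessThan_Suc_atMost)
  hence rel: "lc * \<sigma> ^ m = - (\<Sum>i<m. coeff q i * \<sigma> ^ i)"
    by (simp add: lc_def eq_neg_iff_add_eq_0 add.commute)
  have "\<forall>j. \<exists>a. (\<forall>i. a i \<in> ?K) \<and> lc ^ (p ^ j) * \<sigma> ^ (p ^ j) = (\<Sum>i<m. a i * \<sigma> ^ i)"
    using reduce_pow[OF K m0 _ q(2) rel] q(2) by (simp add: lc_def)
  then obtain A where A: "\<And>j. \<forall>i. A j i \<in> ?K"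
    "\<And>j. lc ^ (p ^ j) * \<sigma> ^ (p ^ j) = (\<Sum>i<m. A j i * \<sigma> ^ i)"
    by metis
  define v where "v = (\<lambda>j i. if i < m then A j i else 0)"
  obtain d where d: "\<forall>j\<in>{..m}. d j \<in> ?K" "\<exists>j\<in>{..m}. d j \<noteq> 0" "\<forall>i. (\<Sum>j\<in>{..m}. d j * v j i) = 0"
  proof -
    have vK: "\<forall>j\<in>{..m}. \<forall>i. v j i \<in> ?K" using A(1) K(1) by (simp add: v_def)
    have v0: "\<forall>j\<in>{..m}. \<forall>i\<ge>m. v j i = 0" by (simp add: v_def)
    show ?thesis using lin_dep[OF K _ _ v0 vK] that by auto
  qed
  define D where "D = (\<lambda>j. if j \<le> m then d j * lc ^ (p ^ j) else 0)"
  have "\<forall>j. D j \<in> ?K"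
  proof
    fix j
    have "lc ^ n \<in> ?K" for n
      by (induction n) (use K q(2) in \<open>auto simp: lc_def\<close>)
    thus "D j \<in> ?K" using d(1) K by (auto simp: D_def)
  qed
  moreover have "\<exists>j\<le>m. D j \<noteq> 0" using d(2) lc0 by (auto simp: D_def)
  moreover have "(\<Sum>j\<le>m. D j * \<sigma> ^ (p ^ j)) = 0"
  proof -
    have "(\<Sum>j\<le>m. D j * \<sigma> ^ (p ^ j)) = (\<Sum>j\<le>m. d j * (\<Sum>i<m. A j i * \<sigma> ^ i))"
      by (intro sum.cong) (auto simp: D_def A(2)[symmetric] mult.assoc)
    also have "\<dots> = (\<Sum>j\<le>m. \<Sum>i<m. d j * v j i * \<sigma> ^ i)"
      by (simp add: sum_distrib_left v_def mult.assoc)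
    also have "\<dots> = (\<Sum>i<m. (\<Sum>j\<le>m. d j * v j i) * \<sigma> ^ i)"
      by (subst sum.swap) (simp add: sum_distrib_right)
    also have "\<dots> = 0" using d(3) by simp
    finally show ?thesis .
  qed
  ultimately show ?thesis by blast
qed

lemma forward:
  fixes k :: "'a::field set" and \<sigma> :: "'a fls"
  assumes k: "is_subfield k" and pr: "prime p" and pC: "p = CHAR('a)"
    and ex: "\<forall>i. \<exists>r. (\<sigma> $$ i) ^ (p ^ r) \<in> k"
    and alg: "algebraic_over (laurent_over k) \<sigma>"
  shows "\<exists>N. \<forall>i. (\<sigma> $$ i) ^ (p ^ N) \<in> k"
proof -
  let ?K = "laurent_over k"
  have prC: "prime CHAR('a)" using pr pC by simp
  obtain m D where D: "\<And>j. D j \<in> ?K" "\<exists>j\<le>m. D j \<noteq> 0" "(\<Sum>j\<le>m. D j * \<sigma> ^ (p ^ j)) = 0"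
    using additive_rel[OF k alg, of p] by blast
  define j0 where "j0 = (LEAST j. j \<le> m \<and> D j \<noteq> 0)"
  have j0: "j0 \<le> m" "D j0 \<noteq> 0" using LeastI_ex[OF D(2)[unfolded Bex_def[symmetric]]] D(2)
    unfolding j0_def by (metis (mono_tags, lifting) LeastI_ex)+
  have below: "D j = 0" if "j < j0" for j
    using not_less_Least[OF that[unfolded j0_def]] j0(1) that by (simp add: j0_def)
  define P0 where "P0 = p ^ j0"
  define \<tau> where "\<tau> = \<sigma> ^ P0"
  have "(\<Sum>j\<le>m. D j * \<sigma> ^ (p ^ j)) = (\<Sum>j\<in>{j0..m}. D j * \<sigma> ^ (p ^ j))"
    using below by (intro sum.mono_neutral_right) auto
  also have "{j0..m} = insert j0 ((\<lambda>s. j0 + s) ` {1..m - j0})"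
    using j0(1) by (auto simp: image_iff intro!: bexI[of _ "_ - j0"])
  also have "(\<Sum>j\<in>insert j0 ((\<lambda>s. j0 + s) ` {1..m - j0}). D j * \<sigma> ^ (p ^ j))
      = D j0 * \<tau> + (\<Sum>s\<in>{1..m - j0}. D (j0 + s) * \<tau> ^ (p ^ s))"
  proof -
    have r1: "(\<Sum>j\<in>(\<lambda>s. j0 + s) ` {1..m - j0}. D j * \<sigma> ^ (p ^ j))
        = (\<Sum>s\<in>{1..m - j0}. D (j0 + s) * \<sigma> ^ (p ^ (j0 + s)))"
      by (subst sum.reindex) (auto simp: inj_on_def)
    have r2: "\<sigma> ^ (p ^ (j0 + s)) = \<tau> ^ (p ^ s)" for s
      by (simp add: \<tau>_def P0_def power_add power_mult)
    have nin: "j0 \<notin> (\<lambda>s. j0 + s) ` {1..m - j0}" by auto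
    show ?thesis
      by (simp only: sum.insert[OF finite_imageI[OF finite_atLeastAtMost] nin] r1 r2)
         (simp add: \<tau>_def P0_def)
  qed
  finally have eq: "D j0 * \<tau> = - (\<Sum>s\<in>{1..m - j0}. D (j0 + s) * \<tau> ^ (p ^ s))"
    using D(3) by (simp add: eq_neg_iff_add_eq_0)
  have fr: "\<tau> $$ n = (if int P0 dvd n then (\<sigma> $$ (n div int P0)) ^ P0 else 0)" for n
    unfolding \<tau>_def by (rule frob_nth[OF prC]) (simp add: P0_def pC)
  have ex\<tau>: "\<forall>n. \<exists>r. (\<tau> $$ n) ^ (p ^ r) \<in> k"
  proof
    fix n
    show "\<exists>r. (\<tau> $$ n) ^ (p ^ r) \<in> k"
    proof (cases "int P0 dvd n")
      case True
      obtain r where r: "(\<sigma> $$ (n div int P0)) ^ (p ^ r) \<in> k" using ex by blast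
      have "((\<sigma> $$ (n div int P0)) ^ P0) ^ (p ^ r) = ((\<sigma> $$ (n div int P0)) ^ (p ^ r)) ^ P0"
        by (simp flip: power_mult add: mult.commute)
      thus ?thesis using True r sf_power[OF k] fr[of n] by (intro exI[of _ r]) simp
    next
      case False
      thus ?thesis using fr[of n] sf_0[OF k] pr by (intro exI[of _ 0]) (simp add: prime_gt_0_nat)
    qed
  qed
  obtain E where E: "\<forall>n. (\<tau> $$ n) ^ (p ^ E) \<in> k"
    using bounded_exp[OF k pr pC ex\<tau> D(1) j0(2) D(1), of "{1..m - j0}" "\<lambda>s. j0 + s"] eq by auto
  have "(\<sigma> $$ i) ^ (p ^ (j0 + E)) \<in> k" for i
  proof -
    have P0pos: "P0 > 0" using pr by (simp add: P0_def prime_gt_0_nat)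
    have "\<tau> $$ (int P0 * i) = (\<sigma> $$ i) ^ P0" using fr[of "int P0 * i"] P0pos by simp
    hence "(\<sigma> $$ i) ^ (p ^ (j0 + E)) = (\<tau> $$ (int P0 * i)) ^ (p ^ E)"
      by (simp add: P0_def power_add power_mult)
    thus ?thesis using E by simp
  qed
  thus ?thesis by blast
qed


theorem theorem2p4:
  fixes k :: "'a::field set" and \<sigma> :: "'a fls" and p :: nat
  assumes "is_alg_closure_of k"
    and "p = CHAR('a)" and "p > 0"
    and "purely_inseparable p k (gen_field k {fls_nth \<sigma> i | i. True})"
  shows "algebraic_over (laurent_over k) \<sigma> \<longleftrightarrow>
         (\<exists>n::nat. \<forall>a \<in> gen_field k {fls_nth \<sigma> i | i. True}. a ^ (p ^ n) \<in> k)"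
proof -
  have k: "is_subfield k" using assms(1) by (simp add: is_alg_closure_of_def)
  have prC: "prime CHAR('a)" using assms(2,3) prime_CHAR_semidom by blast
  have pr: "prime p" using prC assms(2) by simp
  let ?S = "{fls_nth \<sigma> i | i. True}"
  let ?L = "gen_field k ?S"
  have SL: "\<sigma> $$ i \<in> ?L" for i using gen_field_gen[of ?S k] by blast
  show ?thesis
  proof
    assume alg: "algebraic_over (laurent_over k) \<sigma>"
    have ex: "\<forall>i. \<exists>r. (\<sigma> $$ i) ^ (p ^ r) \<in> k"
      using assms(4) SL unfolding purely_inseparable_def by blast
    obtain N where N: "\<forall>i. (\<sigma> $$ i) ^ (p ^ N) \<in> k"
      using forward[OF k pr assms(2) ex alg] by blast
    have "?L \<subseteq> {a. a ^ (CHAR('a) ^ N) \<in> k}"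
      by (rule gen_field_least) (use frob_subfield[OF k prC] N assms(2) in auto)
    thus "\<exists>n. \<forall>a\<in>?L. a ^ (p ^ n) \<in> k" using assms(2) by blast
  next
    assume "\<exists>n. \<forall>a\<in>?L. a ^ (p ^ n) \<in> k"
    then obtain n where n: "\<forall>a\<in>?L. a ^ (p ^ n) \<in> k" by blast
    define Q where "Q = p ^ n"
    have Qpos: "Q > 0" using assms(3) by (simp add: Q_def)
    note K = lo_closed[OF k]
    have \<sigma>Q: "\<sigma> ^ Q \<in> laurent_over k"
      unfolding laurent_over_def
    proof (intro CollectI allI)
      fix i
      have "(\<sigma> ^ Q) $$ i = (if int Q dvd i then (\<sigma> $$ (i div int Q)) ^ Q else 0)"
        by (rule frob_nth[OF prC]) (simp add: Q_def assms(2))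
      thus "(\<sigma> ^ Q) $$ i \<in> k" using n SL sf_0[OF k] by (simp add: Q_def)
    qed
    define q where "q = monom 1 Q - [:\<sigma> ^ Q:]"
    have cq: "coeff q i = (if Q = i then 1 else 0) - (if i = 0 then \<sigma> ^ Q else 0)" for i
      by (cases i) (auto simp: q_def coeff_monom)
    have "q \<noteq> 0"
    proof
      assume "q = 0"
      hence "coeff q Q = 0" by simp
      thus False using cq[of Q] Qpos by simp
    qed
    moreover have "\<forall>i. coeff q i \<in> laurent_over k"
      using cq K \<sigma>Q by auto
    moreover have "poly q \<sigma> = 0" by (simp add: q_def poly_monom)
    ultimately show "algebraic_over (laurent_over k) \<sigma>"
      unfolding algebraic_over_def by blast
  qed
qed

end
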